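(* There exists an absolute constant $C_1>1$ such that the following holds. Let $\mu$ be a centered log-concave probability measure on $\mathbb{R}^n$, let $t\geq 1$ and $\delta\in(0,1)$. Then for every $x\in\delta Z_t^+(\mu)$, $$\varphi_\mu(x)\geq \frac{(1-\delta^t)^2}{C_1^t}.$$
   Context: A log-concave probability measure on $\mathbb{R}^n$ is a Borel probability measure with $\mu(\lambda A+(1-\lambda)B)\geq\mu(A)^\lambda\mu(B)^{1-\lambda}$ for compact $A,B$, $\lambda\in(0,1)$, and $\mu(H)<1$ for every hyperplane $H$; it has density $f_\mu$. Centered means barycenter at $0$. $Z_t^+(\mu)$ is the convex body with support function $h_{Z_t^+(\mu)}(y)=\left(\int\langle x,y\rangle_+^t f_\mu(x)\,dx\right)^{1/t}$, $a_+=\max\{a,0\}$. $\varphi_\mu(x)=\inf\{\mu(H):H$ a half-space containing $x\}$. *)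

theory Defs
  imports "HOL-Probability.Probability"
begin

text \<open>R^n is represented inside nat => real (product topology) as the coordinate
  subspace of functions vanishing from index n on; this lets the dimension n be
  quantified after the absolute constant.\<close>

definition Rn :: "nat \<Rightarrow> (nat \<Rightarrow> real) set" where
  "Rn n = {x. \<forall>i\<ge>n. x i = 0}"

definition ip :: "nat \<Rightarrow> (nat \<Rightarrow> real) \<Rightarrow> (nat \<Rightarrow> real) \<Rightarrow> real" where
  "ip n x y = (\<Sum>i<n. x i * y i)"

definition log_concave :: "nat \<Rightarrow> (nat \<Rightarrow> real) measure \<Rightarrow> bool" where
  "log_concave n M \<longleftrightarrow>
     prob_space M \<and> sets M = sets borel \<and> measure M (Rn n) = 1 \<and>
     (\<forall>A B lam. A \<subseteq> Rn n \<and> B \<subseteq> Rn n \<and> compact A \<and> compact B \<and> 0 < lam \<and> lam < 1 \<longrightarrow>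
        measure M {(\<lambda>i. lam * a i + (1 - lam) * b i) | a b. a \<in> A \<and> b \<in> B}
          \<ge> measure M A powr lam * measure M B powr (1 - lam)) \<and>
     (\<forall>u c. u \<in> Rn n \<and> (\<exists>i<n. u i \<noteq> 0) \<longrightarrow> measure M {z \<in> Rn n. ip n u z = c} < 1)"

definition centered :: "nat \<Rightarrow> (nat \<Rightarrow> real) measure \<Rightarrow> bool" where
  "centered n M \<longleftrightarrow> (\<forall>i<n. integrable M (\<lambda>x. x i) \<and> (\<integral>x. x i \<partial>M) = 0)"

definition support_Zplus :: "nat \<Rightarrow> (nat \<Rightarrow> real) measure \<Rightarrow> real \<Rightarrow> (nat \<Rightarrow> real) \<Rightarrow> real" where
  "support_Zplus n M t y = (\<integral>x. (max (ip n x y) 0) powr t \<partial>M) powr (1 / t)"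

definition Zplus :: "nat \<Rightarrow> (nat \<Rightarrow> real) measure \<Rightarrow> real \<Rightarrow> (nat \<Rightarrow> real) set" where
  "Zplus n M t = {z \<in> Rn n. \<forall>y\<in>Rn n. ip n z y \<le> support_Zplus n M t y}"

definition halfspace :: "nat \<Rightarrow> (nat \<Rightarrow> real) set \<Rightarrow> bool" where
  "halfspace n H \<longleftrightarrow> (\<exists>u c. u \<in> Rn n \<and> (\<exists>i<n. u i \<noteq> 0) \<and> H = {z \<in> Rn n. ip n u z \<le> c})"

definition phi :: "nat \<Rightarrow> (nat \<Rightarrow> real) measure \<Rightarrow> (nat \<Rightarrow> real) \<Rightarrow> real" where
  "phi n M x = Inf {measure M H | H. halfspace n H \<and> x \<in> H}"

end

theory Submission
  imports Defs
begin

lemma pw_floor: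
  fixes y a :: real assumes "0 < a" "0 \<le> y"
  obtains K :: nat where "real K * a \<le> y" "y < real (Suc K) * a"
proof -
  define K where "K = nat \<lfloor>y / a\<rfloor>"
  have e: "real K = real_of_int \<lfloor>y / a\<rfloor>" unfolding K_def using assms by simp
  have "real_of_int \<lfloor>y / a\<rfloor> \<le> y / a" by (rule of_int_floor_le)
  then have 1: "real K * a \<le> y" using assms e by (simp add: le_divide_eq)
  have "y / a < real_of_int \<lfloor>y / a\<rfloor> + 1" by (rule real_of_int_floor_add_one_gt)
  then have "y < (real_of_int \<lfloor>y / a\<rfloor> + 1) * a" using pos_divide_less_eq[OF assms(1)] by blast
  then have "y < (real K + 1) * a" using e by (simp add: add.commute)
  then have 2: "y < real (Suc K) * a" by (simp add: add.commute)
  from 1 2 show ?thesis by (rule that)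
qed

lemma pw1:
  fixes y a :: real assumes "0 < a"
  shows "ennreal (max y 0) \<le> (\<Sum>k. ennreal a * indicator {z. real k * a \<le> z} y)"
proof (cases "y < 0")
  case True then show ?thesis by simp
next
  case False
  then obtain K where K1: "real K * a \<le> y" and K2: "y < real (Suc K) * a"
    using pw_floor[OF assms, of y] by auto
  have "(\<Sum>k<Suc K. ennreal a * indicator {z. real k * a \<le> z} y) = (\<Sum>k<Suc K. ennreal a)"
  proof (rule sum.cong)
    fix k assume "k \<in> {..<Suc K}"
    then have "real k * a \<le> real K * a" using assms by (intro mult_right_mono) auto
    then show "ennreal a * indicator {z. real k * a \<le> z} y = ennreal a"
      using K1 by (simp add: indicator_def)
  qed simp
  also have "\<dots> = ennreal (real (Suc K) * a)"
    using assms by (simp add: ennreal_mult ennreal_of_nat_eq_real_of_nat)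
  finally have "ennreal (max y 0) \<le> (\<Sum>k<Suc K. ennreal a * indicator {z. real k * a \<le> z} y)"
    using K2 False by (simp add: ennreal_leI)
  also have "\<dots> \<le> (\<Sum>k. ennreal a * indicator {z. real k * a \<le> z} y)"
    by (rule sum_le_suminf) (auto intro: summableI)
  finally show ?thesis .
qed

lemma pw2:
  fixes y s t :: real assumes s: "0 < s" and t: "0 < t"
  shows "ennreal (max y 0 powr t) \<le> ennreal (s powr t) +
     (\<Sum>k. ennreal ((real k + 2) powr t * s powr t) * indicator {z. (real k + 1) * s \<le> z} y)"
proof (cases "y < s")
  case True
  then have "max y 0 powr t \<le> s powr t" using s t by (intro powr_mono2) auto
  then have "ennreal (max y 0 powr t) \<le> ennreal (s powr t)" by (rule ennreal_leI)
  then show ?thesis by (rule order_trans) simp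
next
  case False
  then obtain K where K1: "real K * s \<le> y" and K2: "y < real (Suc K) * s"
    using pw_floor[OF s, of y] s by auto
  have "K \<noteq> 0" using False K2 by (cases K) auto
  define k where "k = K - 1"
  have Kk: "real K = real k + 1" using \<open>K \<noteq> 0\<close> unfolding k_def by simp
  have "max y 0 powr t \<le> (real (Suc K) * s) powr t"
    using False K2 s t by (intro powr_mono2) auto
  also have "\<dots> = (real k + 2) powr t * s powr t"
    using Kk s by (simp add: powr_mult add_ac)
  finally have 1: "ennreal (max y 0 powr t) \<le> ennreal ((real k + 2) powr t * s powr t) * indicator {z. (real k + 1) * s \<le> z} y"
    using K1 Kk by (simp add: ennreal_leI)
  have "ennreal ((real k + 2) powr t * s powr t) * indicator {z. (real k + 1) * s \<le> z} y
     = (\<Sum>j\<in>{k}. ennreal ((real j + 2) powr t * s powr t) * indicator {z. (real j + 1) * s \<le> z} y)"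
    by (simp only: sum.insert[OF finite.emptyI] empty_iff not_False_eq_True sum.empty add_0_right)
  also have "\<dots> \<le> (\<Sum>j. ennreal ((real j + 2) powr t * s powr t) * indicator {z. (real j + 1) * s \<le> z} y)"
    by (rule sum_le_suminf) (auto intro: summableI)
  also have "\<dots> \<le> ennreal (s powr t) + (\<Sum>j. ennreal ((real j + 2) powr t * s powr t) * indicator {z. (real j + 1) * s \<le> z} y)"
    by simp
  finally show ?thesis using 1 by (rule order_trans[rotated])
qed

lemma num1:
  fixes t :: real assumes t: "1 \<le> t"
  shows "(real k + 2) powr t * exp (- t * real k) \<le> 2 powr t * exp (- real k / 2)"
proof -
  have a: "(real k + 2) * exp (- real k) \<le> 2 * exp (- real k / 2)"
  proof -
    have "1 + real k / 2 \<le> exp (real k / 2)" by (rule exp_ge_add_one_self)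
    then have "(real k + 2) \<le> 2 * exp (real k / 2)" by linarith
    then have "(real k + 2) * exp (- real k) \<le> 2 * exp (real k / 2) * exp (- real k)"
      by (rule mult_right_mono) simp
    also have "\<dots> = 2 * exp (- real k / 2)" by (simp add: mult.assoc flip: exp_add)
    finally show ?thesis .
  qed
  have e1: "exp (- real k) powr t = exp (- t * real k)" by (simp add: powr_def)
  have e2: "exp (- real k / 2) powr t = exp (- t * real k / 2)" by (simp add: powr_def algebra_simps)
  have "(real k + 2) powr t * exp (- t * real k) = ((real k + 2) * exp (- real k)) powr t"
    by (subst powr_mult) (use e1 in auto)
  also have "\<dots> \<le> (2 * exp (- real k / 2)) powr t"
    using a t by (intro powr_mono2) auto
  also have "\<dots> = 2 powr t * exp (- t * real k / 2)"
    by (subst powr_mult) (use e2 in auto)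
  also have "\<dots> \<le> 2 powr t * exp (- real k / 2)"
  proof -
    have "real k \<le> t * real k" using mult_right_mono[OF t, of "real k"] by simp
    then show ?thesis by (intro mult_left_mono) auto
  qed
  finally show ?thesis .
qed

locale lc1 = prob_space M for M :: "'a measure" +
  fixes X :: "'a \<Rightarrow> real" and G :: "real \<Rightarrow> real"
  assumes Xi: "integrable M X"
    and X0: "integral\<^sup>L M X = 0"
    and G_def: "G = (\<lambda>s. measure M {x\<in>space M. s \<le> X x})"
    and LC: "\<And>a b l. 0 < l \<Longrightarrow> l < 1 \<Longrightarrow> G (l*a + (1-l)*b) \<ge> G a powr l * G b powr (1-l)"
    and ND: "\<not> (AE x in M. X x = 0)"
begin

lemma Xm[measurable]: "X \<in> borel_measurable M"
  using Xi by auto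

lemma Gset[measurable]: "{x\<in>space M. s \<le> X x} \<in> sets M"
  by measurable

lemma G_nonneg: "0 \<le> G s" by (simp add: G_def)
lemma G_le1: "G s \<le> 1" by (simp add: G_def)

lemma G_mono: "s \<le> s' \<Longrightarrow> G s' \<le> G s"
  unfolding G_def by (rule finite_measure_mono) auto

lemma fin: "emeasure M A < \<infinity>" by (simp add: emeasure_eq_measure infinity_ennreal_def)

definition m where "m = integral\<^sup>L M (\<lambda>x. max (X x) 0)"

lemma ip_int: "integrable M (\<lambda>x. max (X x) 0)"
  using Xi by (intro integrable_max) auto
lemma in_int: "integrable M (\<lambda>x. max (- X x) 0)"
  using Xi by (intro integrable_max) auto

lemma m_eq: "integral\<^sup>L M (\<lambda>x. max (- X x) 0) = m"
proof -
  have "integral\<^sup>L M X = integral\<^sup>L M (\<lambda>x. max (X x) 0 - max (- X x) 0)"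
    by (rule Bochner_Integration.integral_cong) auto
  also have "\<dots> = m - integral\<^sup>L M (\<lambda>x. max (- X x) 0)"
    unfolding m_def by (rule Bochner_Integration.integral_diff[OF ip_int in_int])
  finally have "integral\<^sup>L M X = m - integral\<^sup>L M (\<lambda>x. max (- X x) 0)" .
  with X0 show ?thesis by simp
qed

lemma m_nonneg: "0 \<le> m" unfolding m_def by (rule integral_nonneg_AE) auto

lemma m_pos: "0 < m"
proof (rule ccontr)
  assume "\<not> 0 < m"
  then have m0: "m = 0" using m_nonneg by simp
  have "integral\<^sup>L M (\<lambda>x. max (X x) 0 + max (- X x) 0) = 0"
    using m0 m_eq ip_int in_int unfolding m_def by simp
  moreover have "integrable M (\<lambda>x. max (X x) 0 + max (- X x) 0)"
    using ip_int in_int by simp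
  moreover have "AE x in M. 0 \<le> max (X x) 0 + max (- X x) 0" by (rule AE_I2) simp
  ultimately have "AE x in M. max (X x) 0 + max (- X x) 0 = 0"
    using integral_nonneg_eq_0_iff_AE[of M "\<lambda>x. max (X x) 0 + max (- X x) 0"] by blast
  then have "AE x in M. X x = 0" by (rule eventually_mono) auto
  with ND show False by simp
qed

lemma markov: assumes "0 \<le> a" shows "a * G a \<le> m"
proof -
  have s1: "{x\<in>space M. a \<le> X x} \<in> sets M" by measurable
  have int1: "integrable M (\<lambda>x. a * indicator {x\<in>space M. a \<le> X x} x)"
    by (rule integrable_mult_right, rule integrable_real_indicator[OF s1 fin])
  have "a * G a = integral\<^sup>L M (\<lambda>x. a * indicator {x\<in>space M. a \<le> X x} x)"
    by (simp add: G_def)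
  also have "\<dots> \<le> m" unfolding m_def
    by (rule integral_mono[OF int1 ip_int]) (use assms in \<open>auto simp: indicator_def\<close>)
  finally show ?thesis .
qed

lemma lower: assumes "0 < b" shows "b * (1 - G (- b)) \<le> m"
proof -
  have s1: "{x\<in>space M. X x < -b} \<in> sets M" by measurable
  have int1: "integrable M (\<lambda>x. b * indicator {x\<in>space M. X x < -b} x)"
    by (rule integrable_mult_right, rule integrable_real_indicator[OF s1 fin])
  have "1 - G (-b) = measure M (space M - {x\<in>space M. -b \<le> X x})"
    by (simp add: G_def prob_compl)
  also have "space M - {x\<in>space M. -b \<le> X x} = {x\<in>space M. X x < -b}" by auto
  finally have "b * (1 - G (- b)) = integral\<^sup>L M (\<lambda>x. b * indicator {x\<in>space M. X x < -b} x)"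
    by simp
  also have "\<dots> \<le> integral\<^sup>L M (\<lambda>x. max (- X x) 0)"
    by (rule integral_mono[OF int1 in_int]) (use assms in \<open>auto simp: indicator_def\<close>)
  finally show ?thesis using m_eq by simp
qed

lemma upper_sum: assumes "0 < a"
  shows "ennreal m \<le> (\<Sum>k. ennreal (a * G (real k * a)))"
proof -
  have "ennreal m = (\<integral>\<^sup>+x. ennreal (max (X x) 0) \<partial>M)"
    unfolding m_def using ip_int by (rule nn_integral_eq_integral[symmetric]) auto
  also have "\<dots> \<le> (\<integral>\<^sup>+x. (\<Sum>k. ennreal a * indicator {z. real k * a \<le> z} (X x)) \<partial>M)"
    by (rule nn_integral_mono) (rule pw1[OF assms])
  also have "\<dots> = (\<Sum>k. \<integral>\<^sup>+x. ennreal a * indicator {z. real k * a \<le> z} (X x) \<partial>M)"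
    by (rule nn_integral_suminf) measurable
  also have "\<dots> = (\<Sum>k. ennreal (a * G (real k * a)))"
  proof (rule suminf_cong)
    fix k
    have "(\<integral>\<^sup>+x. ennreal a * indicator {z. real k * a \<le> z} (X x) \<partial>M)
       = (\<integral>\<^sup>+x. ennreal a * indicator {x\<in>space M. real k * a \<le> X x} x \<partial>M)"
      by (rule nn_integral_cong) (auto simp: indicator_def)
    also have "\<dots> = ennreal (a * G (real k * a))"
      using assms by (simp add: nn_integral_cmult_indicator emeasure_eq_measure G_def ennreal_mult)
    finally show "(\<integral>\<^sup>+x. ennreal a * indicator {z. real k * a \<le> z} (X x) \<partial>M) = ennreal (a * G (real k * a))" .
  qed
  finally show ?thesis .
qed

end

context lc1 begin

lemma p_pos: "0 < G 0"
proof (rule ccontr)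
  assume "\<not> 0 < G 0"
  then have g0: "G 0 = 0" using G_nonneg[of 0] by linarith
  have "\<And>k. G (real k * 1) = 0"
  proof -
    fix k
    have "G (real k * 1) \<le> G 0" by (rule G_mono) simp
    then show "G (real k * 1) = 0" using g0 G_nonneg[of "real k * 1"] by linarith
  qed
  then have "ennreal m \<le> 0" using upper_sum[of 1] by simp
  then have "m \<le> 0" using m_nonneg by simp
  then show False using m_pos by simp
qed

lemma lc_pow: "G (real (Suc j) * a) * G 0 ^ j \<le> G a ^ Suc j"
proof (cases "j = 0")
  case True then show ?thesis by simp
next
  case False
  define p where "p = G 0"
  have pp: "0 < p" using p_pos by (simp add: p_def)
  define l where "l = 1 / real (Suc j)"
  have l0: "0 < l" and l1: "l < 1" using False by (auto simp: l_def)
  have arg: "l * (real (Suc j) * a) + (1 - l) * 0 = a" by (simp add: l_def)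
  have A: "G (real (Suc j) * a) powr l * p powr (1 - l) \<le> G a"
  proof -
    have "G (real (Suc j) * a) powr l * G 0 powr (1 - l) \<le> G (l * (real (Suc j) * a) + (1 - l) * 0)"
      by (rule LC[OF l0 l1])
    then show ?thesis unfolding arg p_def .
  qed
  have A0: "0 \<le> G (real (Suc j) * a) powr l * p powr (1 - l)" by simp
  have B: "(G (real (Suc j) * a) powr l * p powr (1 - l)) ^ Suc j \<le> G a ^ Suc j"
    by (rule power_mono[OF A A0])
  have P: "(p powr (1 - l)) ^ Suc j = p ^ j"
  proof -
    have "(p powr (1 - l)) ^ Suc j = p powr (real (Suc j) * (1 - l))"
      by (subst powr_power) (use pp in auto)
    also have "real (Suc j) * (1 - l) = real j" by (simp add: l_def field_simps)
    also have "p powr real j = p ^ j" using pp by (simp add: powr_realpow)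
    finally show ?thesis .
  qed
  show ?thesis
  proof (cases "G (real (Suc j) * a) = 0")
    case True then show ?thesis using G_nonneg by simp
  next
    case nz: False
    have "(G (real (Suc j) * a) powr l) ^ Suc j = G (real (Suc j) * a) powr (real (Suc j) * l)"
      by (subst powr_power) (use nz in auto)
    also have "real (Suc j) * l = 1" by (simp add: l_def)
    also have "G (real (Suc j) * a) powr 1 = G (real (Suc j) * a)" using G_nonneg by simp
    finally have Q: "(G (real (Suc j) * a) powr l) ^ Suc j = G (real (Suc j) * a)" .
    have E: "(G (real (Suc j) * a) powr l * p powr (1 - l)) ^ Suc j = G (real (Suc j) * a) * p ^ j"
      by (simp only: power_mult_distrib Q P)
    have "G (real (Suc j) * a) * p ^ j \<le> G a ^ Suc j" using B unfolding E .
    then show ?thesis by (simp add: p_def)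
  qed
qed

lemma tail_geo: "G (real k * a) \<le> G 0 * (G a / G 0) ^ k"
proof (cases k)
  case 0 then show ?thesis by simp
next
  case (Suc j)
  have pp: "0 < G 0" by (rule p_pos)
  have "G (real (Suc j) * a) \<le> G a ^ Suc j / G 0 ^ j"
    using lc_pow[of j a] pp by (simp add: pos_le_divide_eq)
  also have "\<dots> = G 0 * (G a / G 0) ^ Suc j"
    using pp by (simp add: power_divide field_simps)
  finally show ?thesis using Suc by simp
qed

lemma left_bound:
  assumes a: "0 < a" and b: "0 < b" and ga: "G 0 * exp (-1) \<le> G a"
  shows "G (- b) \<le> G 0 * exp (b / a)"
proof (cases "G (- b) = 0")
  case True then show ?thesis using p_pos by simp
next
  case False
  define p where "p = G 0"
  have pp: "0 < p" using p_pos by (simp add: p_def)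
  have gb: "0 < G (-b)" using False G_nonneg[of "-b"] by linarith
  define l where "l = a / (a + b)"
  have l0: "0 < l" and l1: "l < 1" using a b by (auto simp: l_def)
  have arg: "l * (- b) + (1 - l) * a = 0" using a b by (simp add: l_def field_simps)
  have "G (- b) powr l * G a powr (1 - l) \<le> p"
    using LC[OF l0 l1, of "-b" a] arg by (simp add: p_def)
  moreover have "G (- b) powr l * (p * exp (-1)) powr (1 - l) \<le> G (- b) powr l * G a powr (1 - l)"
    using ga l1 pp by (intro mult_left_mono powr_mono2) (auto simp: p_def)
  ultimately have le: "G (- b) powr l * (p * exp (-1)) powr (1 - l) \<le> p" by linarith
  have pos: "0 < G (- b) powr l * (p * exp (-1)) powr (1 - l)" using gb pp by simp
  have "ln (G (- b) powr l * (p * exp (-1)) powr (1 - l)) \<le> ln p"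
    using le pos pp by simp
  moreover have "ln (G (- b) powr l * (p * exp (-1)) powr (1 - l)) = l * ln (G (-b)) + (1 - l) * (ln p - 1)"
    using gb pp by (simp add: ln_mult ln_powr)
  ultimately have "l * ln (G (-b)) + (1 - l) * (ln p - 1) \<le> ln p" by simp
  moreover have "l * (b / a) = 1 - l" using a b by (simp add: l_def field_simps)
  ultimately have "l * (ln (G (-b)) - ln p - b / a) \<le> 0" by (simp add: algebra_simps)
  then have "ln (G (-b)) - ln p - b / a \<le> 0" using l0 by (simp add: mult_le_0_iff)
  then have "ln (G (-b)) \<le> ln p + b / a" by simp
  then have "exp (ln (G (-b))) \<le> exp (ln p + b / a)" by simp
  then show ?thesis using gb pp by (simp add: exp_add p_def)
qed

lemma upper_geo:
  assumes a: "0 < a" and ga: "G a \<le> G 0 * exp (-1)"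
  shows "m \<le> a * G 0 / (1 - exp (-1))"
proof -
  have pp: "0 < G 0" by (rule p_pos)
  have r0: "0 \<le> G a / G 0" using pp G_nonneg by simp
  have r1: "G a / G 0 \<le> exp (-1)" using ga pp by (simp add: divide_le_eq mult.commute)
  have tk: "a * G (real k * a) \<le> a * G 0 * exp (-1) ^ k" for k
  proof -
    have "G (real k * a) \<le> G 0 * (G a / G 0) ^ k" by (rule tail_geo)
    also have "\<dots> \<le> G 0 * exp (-1) ^ k" using pp r0 r1 by (intro mult_left_mono power_mono) auto
    finally show ?thesis using a by (simp add: mult.assoc)
  qed
  have e1: "exp (-1::real) < 1" by simp
  have sums: "(\<lambda>k. a * G 0 * exp (-1) ^ k) sums (a * G 0 * (1 / (1 - exp (-1))))"
    by (rule sums_mult, rule geometric_sums) (use e1 in simp)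
  have "ennreal m \<le> (\<Sum>k. ennreal (a * G (real k * a)))" by (rule upper_sum[OF a])
  also have "\<dots> \<le> (\<Sum>k. ennreal (a * G 0 * exp (-1) ^ k))"
    by (rule suminf_le) (auto intro: summableI ennreal_leI tk)
  also have "\<dots> = ennreal (a * G 0 * (1 / (1 - exp (-1))))"
    by (rule suminf_ennreal_eq[OF _ sums]) (use a pp in simp)
  finally have "ennreal m \<le> ennreal (a * G 0 * (1 / (1 - exp (-1))))" .
  then have "m \<le> a * G 0 * (1 / (1 - exp (-1)))"
    using a pp e1 by (subst (asm) ennreal_le_iff) auto
  then show ?thesis by simp
qed

end

context lc1 begin

lemma exp_m1: "exp (-1::real) \<le> 1/2"
proof -
  have "1 + 1 \<le> exp (1::real)" by (rule exp_ge_add_one_self)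
  then show ?thesis by (simp add: exp_minus divide_simps)
qed

lemma grunbaum: "1/10 \<le> G 0"
proof (rule ccontr)
  assume "\<not> 1/10 \<le> G 0"
  then have p10: "G 0 < 1/10" by simp
  have pp: "0 < G 0" by (rule p_pos)
  define c where "c = G 0 * exp (-1)"
  have c0: "0 < c" using pp by (simp add: c_def)
  have em: "0 < 1 - exp (-1::real)" using exp_m1 by simp
  define a0 where "a0 = 2 * exp 1 * m / G 0"
  have a00: "0 < a0" using m_pos pp by (simp add: a0_def)
  have "a0 * G a0 \<le> m" using markov a00 by simp
  then have "G a0 \<le> m / a0" using a00 by (simp add: le_divide_eq mult.commute)
  also have "m / a0 = G 0 / (2 * exp 1)" using m_pos pp by (simp add: a0_def field_simps)
  also have "\<dots> < c" using pp by (simp add: c_def exp_minus field_simps)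
  finally have ga0: "G a0 < c" .
  have "\<exists>a>0. G a < c \<and> c \<le> G (a/2)"
  proof (rule ccontr)
    assume H: "\<not> (\<exists>a>0. G a < c \<and> c \<le> G (a/2))"
    have ind: "G (a0 / 2^k) < c" for k
    proof (induction k)
      case 0 then show ?case using ga0 by simp
    next
      case (Suc k)
      have "0 < a0 / 2^k" using a00 by simp
      with H Suc have "G (a0 / 2^k / 2) < c" by (meson not_le)
      then show ?case by (simp add: field_simps)
    qed
    have bnd: "m \<le> a0 * G 0 / (1 - exp (-1)) * (1/2)^k" for k
    proof -
      have "m \<le> (a0 / 2^k) * G 0 / (1 - exp (-1))"
        using ind[of k] a00 by (intro upper_geo) (auto simp: c_def)
      then show ?thesis by (simp add: field_simps power_divide)
    qed
    define K where "K = a0 * G 0 / (1 - exp (-1))"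
    have K0: "0 < K" using a00 pp em by (simp add: K_def)
    obtain k where k: "(1/2::real)^k < m / K"
      using real_arch_pow_inv[of "m / K" "1/2"] m_pos K0 by auto
    have "m \<le> K * (1/2)^k" using bnd[of k] by (simp add: K_def)
    also have "\<dots> < K * (m / K)" using k K0 by (intro mult_strict_left_mono) auto
    also have "\<dots> = m" using K0 by simp
    finally show False by simp
  qed
  then obtain a where a0: "0 < a" and ga: "G a < c" and ga2: "c \<le> G (a/2)" by blast
  define L where "L = ln (1 / (2 * G 0))"
  have "exp 1 < 1 / (2 * G 0)"
  proof -
    have "exp (1::real) < 5" using e_less_272 by simp
    also have "5 < 1 / (2 * G 0)" using pp p10 by (simp add: less_divide_eq)
    finally show ?thesis .
  qed
  then have "ln (exp 1) < L" unfolding L_def using pp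
    by (subst ln_less_cancel_iff) auto
  then have L1: "1 < L" by simp
  define b where "b = a / 2 * L"
  have b0: "0 < b" using a0 L1 by (simp add: b_def)
  have "G (- b) \<le> G 0 * exp (b / (a/2))"
    using left_bound[of "a/2" b] a0 b0 ga2 by (simp add: c_def)
  also have "b / (a/2) = L" using a0 by (simp add: b_def)
  also have "G 0 * exp L = 1/2" unfolding L_def using pp by simp
  finally have gb: "G (-b) \<le> 1/2" .
  have "b * (1/2) \<le> b * (1 - G (-b))" using gb b0 by (intro mult_left_mono) auto
  also have "\<dots> \<le> m" by (rule lower[OF b0])
  also have "m \<le> a * G 0 / (1 - exp (-1))"
    using upper_geo[OF a0] ga by (simp add: c_def)
  finally have "a / 2 * L * (1/2) \<le> a * G 0 / (1 - exp (-1))" by (simp add: b_def)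
  moreover have "a / 4 < a / 2 * L * (1/2)" using a0 L1 by simp
  ultimately have "a / 4 < a * G 0 / (1 - exp (-1))" by linarith
  then have "(1 - exp (-1)) * a / 4 < a * G 0" using em by (simp add: field_simps)
  then have "a * ((1 - exp (-1)) / 4 - G 0) < 0" by (simp add: algebra_simps)
  then have "(1 - exp (-1)) / 4 - G 0 < 0" using a0 by (simp add: mult_less_0_iff)
  then have "(1 - exp (-1)) / 4 < G 0" by simp
  moreover have "1/8 \<le> (1 - exp (-1::real)) / 4" using exp_m1 by simp
  ultimately show False using p10 by linarith
qed

end

context lc1 begin

lemma moment_sum:
  assumes s: "0 < s" and t: "0 < t"
  shows "(\<integral>\<^sup>+x. ennreal (max (X x) 0 powr t) \<partial>M) \<le>
     ennreal (s powr t) + (\<Sum>k. ennreal ((real k + 2) powr t * s powr t * G ((real k + 1) * s)))"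
proof -
  have "(\<integral>\<^sup>+x. ennreal (max (X x) 0 powr t) \<partial>M) \<le>
     (\<integral>\<^sup>+x. ennreal (s powr t) + (\<Sum>k. ennreal ((real k + 2) powr t * s powr t) * indicator {z. (real k + 1) * s \<le> z} (X x)) \<partial>M)"
    by (rule nn_integral_mono) (rule pw2[OF s t])
  also have "\<dots> = (\<integral>\<^sup>+x. ennreal (s powr t) \<partial>M) + (\<integral>\<^sup>+x. (\<Sum>k. ennreal ((real k + 2) powr t * s powr t) * indicator {z. (real k + 1) * s \<le> z} (X x)) \<partial>M)"
    by (rule nn_integral_add) measurable
  also have "(\<integral>\<^sup>+x. ennreal (s powr t) \<partial>M) = ennreal (s powr t)"
    by (simp add: emeasure_space_1)
  also have "(\<integral>\<^sup>+x. (\<Sum>k. ennreal ((real k + 2) powr t * s powr t) * indicator {z. (real k + 1) * s \<le> z} (X x)) \<partial>M)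
      = (\<Sum>k. \<integral>\<^sup>+x. ennreal ((real k + 2) powr t * s powr t) * indicator {z. (real k + 1) * s \<le> z} (X x) \<partial>M)"
    by (rule nn_integral_suminf) measurable
  also have "\<dots> = (\<Sum>k. ennreal ((real k + 2) powr t * s powr t * G ((real k + 1) * s)))"
  proof (rule suminf_cong)
    fix k
    have "(\<integral>\<^sup>+x. ennreal ((real k + 2) powr t * s powr t) * indicator {z. (real k + 1) * s \<le> z} (X x) \<partial>M)
       = (\<integral>\<^sup>+x. ennreal ((real k + 2) powr t * s powr t) * indicator {x\<in>space M. (real k + 1) * s \<le> X x} x \<partial>M)"
      by (rule nn_integral_cong) (auto simp: indicator_def)
    also have "\<dots> = ennreal ((real k + 2) powr t * s powr t * G ((real k + 1) * s))"
      by (simp add: nn_integral_cmult_indicator emeasure_eq_measure G_def ennreal_mult)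
    finally show "(\<integral>\<^sup>+x. ennreal ((real k + 2) powr t * s powr t) * indicator {z. (real k + 1) * s \<le> z} (X x) \<partial>M)
       = ennreal ((real k + 2) powr t * s powr t * G ((real k + 1) * s))" .
  qed
  finally show ?thesis .
qed

lemma two_powr_le: "2 powr t \<le> exp t" if "0 \<le> t" for t :: real
proof -
  have "2 powr t = exp (t * ln 2)" by (simp add: powr_def)
  also have "\<dots> \<le> exp t"
  proof -
    have "t * ln 2 \<le> t * 1" using that ln_2_less_1 by (intro mult_left_mono) auto
    then show ?thesis by simp
  qed
  finally show ?thesis .
qed

lemma main1d:
  assumes t: "1 \<le> t" and d0: "0 < d" and d1: "d < 1" and h0: "0 \<le> h"
    and hint: "ennreal (h powr t) \<le> (\<integral>\<^sup>+x. ennreal (max (X x) 0 powr t) \<partial>M)"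
  shows "(1 - d powr t) / (30 * exp t) \<le> G (d * h)"
proof -
  have p10: "1/10 \<le> G 0" by (rule grunbaum)
  have dt0: "0 \<le> d powr t" by simp
  have dt1: "d powr t \<le> 1"
  proof -
    have "d powr t \<le> 1 powr t" using d0 d1 t by (intro powr_mono2) auto
    then show ?thesis by simp
  qed
  have et: "1 \<le> exp t" using t by simp
  have base: "(1 - d powr t) / (30 * exp t) \<le> 1 / (10 * exp t)"
  proof -
    have l3: "1 - d powr t \<le> 3" using dt0 by linarith
    have "(1 - d powr t) / (30 * exp t) \<le> 3 / (30 * exp t)"
      by (rule divide_right_mono[OF l3]) simp
    then show ?thesis by simp
  qed
  show ?thesis
  proof (cases "h = 0")
    case True
    have "1 / (10 * exp t) \<le> 1 / 10" using et by (simp add: field_simps)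
    with base have "(1 - d powr t) / (30 * exp t) \<le> 1 / 10" by linarith
    moreover have "G (d * h) = G 0" using True by simp
    ultimately show ?thesis using p10 by linarith
  next
    case False
    then have hp: "0 < h" using h0 by simp
    define s where "s = d * h"
    have s0: "0 < s" using hp d0 by (simp add: s_def)
    define q where "q = G s"
    show ?thesis
    proof (cases "G 0 * exp (- t) \<le> q")
      case True
      have "1 / (10 * exp t) = 1/10 * exp (- t)" by (simp add: exp_minus field_simps)
      also have "\<dots> \<le> G 0 * exp (- t)" using p10 by (intro mult_right_mono) auto
      also have "\<dots> \<le> q" by (rule True)
      finally show ?thesis using base by (simp add: q_def s_def)
    next
      case False
      then have qs: "q < G 0 * exp (- t)" by simp
      have pp: "0 < G 0" by (rule p_pos)
      have q0: "0 \<le> q" by (simp add: q_def G_nonneg)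
      have r0: "0 \<le> q / G 0" using q0 pp by simp
      have r1: "q / G 0 \<le> exp (- t)" using qs pp by (simp add: divide_le_eq mult.commute)
      have tail: "G ((real k + 1) * s) \<le> q * exp (- t * real k)" for k
      proof -
        have "G (real (Suc k) * s) \<le> G 0 * (G s / G 0) ^ Suc k" by (rule tail_geo)
        also have "\<dots> = q * (q / G 0) ^ k" using pp by (simp add: q_def)
        also have "\<dots> \<le> q * exp (- t) ^ k" using q0 r0 r1 by (intro mult_left_mono power_mono) auto
        also have "exp (- t) ^ k = exp (- t * real k)" by (simp add: exp_of_nat_mult[symmetric] mult.commute)
        finally show ?thesis by (simp add: add.commute)
      qed
      have trm: "(real k + 2) powr t * s powr t * G ((real k + 1) * s) \<le> 2 powr t * s powr t * q * exp (-1/2) ^ k" for k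
      proof -
        have "(real k + 2) powr t * s powr t * G ((real k + 1) * s) \<le> (real k + 2) powr t * s powr t * (q * exp (- t * real k))"
          using tail[of k] by (intro mult_left_mono) auto
        also have "\<dots> = ((real k + 2) powr t * exp (- t * real k)) * (s powr t * q)" by (simp add: algebra_simps)
        also have "\<dots> \<le> (2 powr t * exp (- real k / 2)) * (s powr t * q)"
          using num1[OF t, of k] q0 by (intro mult_right_mono) auto
        also have "exp (- real k / 2) = exp (-1/2) ^ k" by (simp add: exp_of_nat_mult[symmetric])
        finally show ?thesis by (simp add: algebra_simps)
      qed
      have e2: "exp (-1/2::real) < 1" by simp
      have e3: "1 / (1 - exp (-1/2::real)) \<le> 3"
      proof -
        have "1 + 1/2 \<le> exp (1/2::real)" by (rule exp_ge_add_one_self)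
        then have "exp (-1/2::real) \<le> 2/3" by (simp add: exp_minus divide_simps)
        then show ?thesis by (simp add: divide_simps)
      qed
      have sums: "(\<lambda>k. 2 powr t * s powr t * q * exp (-1/2) ^ k) sums (2 powr t * s powr t * q * (1 / (1 - exp (-1/2))))"
        by (rule sums_mult, rule geometric_sums) (use e2 in simp)
      have "ennreal (h powr t) \<le> ennreal (s powr t) + (\<Sum>k. ennreal ((real k + 2) powr t * s powr t * G ((real k + 1) * s)))"
        using hint moment_sum[OF s0, of t] t by simp
      also have "(\<Sum>k. ennreal ((real k + 2) powr t * s powr t * G ((real k + 1) * s))) \<le> (\<Sum>k. ennreal (2 powr t * s powr t * q * exp (-1/2) ^ k))"
        by (rule suminf_le[OF ennreal_leI[OF trm]]) (auto intro: summableI)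
      also have "\<dots> = ennreal (2 powr t * s powr t * q * (1 / (1 - exp (-1/2))))"
        by (rule suminf_ennreal_eq[OF _ sums]) (use q0 in simp)
      finally have "ennreal (h powr t) \<le> ennreal (s powr t + 2 powr t * s powr t * q * (1 / (1 - exp (-1/2))))"
        using q0 by (simp add: ennreal_plus[symmetric] del: ennreal_plus)
      then have "h powr t \<le> s powr t + 2 powr t * s powr t * q * (1 / (1 - exp (-1/2)))"
        using q0 e2 by (subst (asm) ennreal_le_iff) auto
      also have "\<dots> \<le> s powr t + 2 powr t * s powr t * q * 3"
        using e3 q0 by (intro add_left_mono mult_left_mono) auto
      also have "s powr t = d powr t * h powr t" using d0 hp by (simp add: s_def powr_mult)
      finally have "h powr t \<le> h powr t * (d powr t * (1 + 3 * 2 powr t * q))" by (simp add: algebra_simps)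
      then have "1 \<le> d powr t * (1 + 3 * 2 powr t * q)" using hp by simp
      also have "\<dots> \<le> d powr t + 3 * 2 powr t * q"
      proof -
        have Y: "d powr t * (3 * 2 powr t * q) \<le> 3 * 2 powr t * q"
          by (rule mult_left_le_one_le) (use q0 dt0 dt1 in auto)
        have "d powr t * (1 + 3 * 2 powr t * q) = d powr t + d powr t * (3 * 2 powr t * q)"
          by (simp add: distrib_left)
        with Y show ?thesis by linarith
      qed
      finally have "(1 - d powr t) \<le> (3 * 2 powr t) * q" by simp
      then have A: "(1 - d powr t) / (3 * 2 powr t) \<le> q" by (simp add: divide_le_eq mult.commute)
      have "(1 - d powr t) / (30 * exp t) \<le> (1 - d powr t) / (3 * 2 powr t)"
      proof -
        have "3 * 2 powr t \<le> 30 * exp t" using two_powr_le[of t] t exp_gt_zero[of t] by linarith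
        then show ?thesis using dt1 by (intro divide_left_mono) auto
      qed
      with A show ?thesis by (simp add: q_def s_def)
    qed
  qed
qed

end

lemma ip_comm: "ip n a b = ip n b a" by (simp add: ip_def mult.commute)

lemma ip_cont: "continuous_on UNIV (\<lambda>w. ip n w th)"
  unfolding ip_def by (intro continuous_on_sum continuous_on_mult_right continuous_on_product_coordinates)

lemma Rn_closed: "closed (Rn n)"
proof -
  have "Rn n = (\<Inter>i\<in>{n..}. {w. w i = 0})" by (auto simp: Rn_def)
  moreover have "closed (\<Inter>i\<in>{n..}. {w::nat\<Rightarrow>real. w i = 0})"
    by (intro closed_INT ballI closed_Collect_eq continuous_on_product_coordinates continuous_on_const)
  ultimately show ?thesis by simp
qed

definition bx :: "nat \<Rightarrow> nat \<Rightarrow> (nat \<Rightarrow> real) set" where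
  "bx n k = PiE UNIV (\<lambda>i. if i < n then {- real k..real k} else {0})"

lemma box_compact: "compact (bx n k)"
proof -
  have "compactin (product_topology (\<lambda>i::nat. euclidean) UNIV) (bx n k)"
    unfolding bx_def by (subst compactin_PiE) (auto simp: compactin_euclidean_iff)
  then show ?thesis by (simp add: euclidean_product_topology compactin_euclidean_iff)
qed

lemma box_iff: "w \<in> bx n k \<longleftrightarrow> (\<forall>i. (i < n \<longrightarrow> \<bar>w i\<bar> \<le> real k) \<and> (n \<le> i \<longrightarrow> w i = 0))"
proof
  assume "w \<in> bx n k"
  then have "\<forall>i. w i \<in> (if i < n then {- real k..real k} else {0})" by (auto simp: bx_def PiE_iff)
  then show "\<forall>i. (i < n \<longrightarrow> \<bar>w i\<bar> \<le> real k) \<and> (n \<le> i \<longrightarrow> w i = 0)"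
    by (metis abs_le_iff atLeastAtMost_iff minus_le_iff not_le singletonD)
next
  assume H: "\<forall>i. (i < n \<longrightarrow> \<bar>w i\<bar> \<le> real k) \<and> (n \<le> i \<longrightarrow> w i = 0)"
  have "w i \<in> (if i < n then {- real k..real k} else {0})" for i
    using H[rule_format, of i] by (cases "i < n") (auto simp: abs_le_iff)
  then show "w \<in> bx n k" by (auto simp: bx_def PiE_iff)
qed

lemma box_sub: "bx n k \<subseteq> Rn n"
  by (auto simp: box_iff Rn_def)

lemma box_mono: assumes "k \<le> k'" shows "bx n k \<subseteq> bx n k'"
proof
  fix w assume "w \<in> bx n k"
  moreover have "real k \<le> real k'" using assms by simp
  ultimately show "w \<in> bx n k'" unfolding box_iff by (meson order_trans)
qed

lemma box_ex: assumes "w \<in> Rn n" shows "\<exists>k. w \<in> bx n k"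
proof -
  obtain k where k: "(\<Sum>i<n. \<bar>w i\<bar>) \<le> real k" using real_arch_simple by blast
  have "\<bar>w i\<bar> \<le> real k" if "i < n" for i
  proof -
    have "\<bar>w i\<bar> \<le> (\<Sum>i<n. \<bar>w i\<bar>)" using that by (intro member_le_sum) auto
    with k show ?thesis by linarith
  qed
  then have "w \<in> bx n k" using assms by (auto simp: box_iff Rn_def)
  then show ?thesis by blast
qed

locale lcn =
  fixes n :: nat and M :: "(nat \<Rightarrow> real) measure"
  assumes LCn: "log_concave n M"
begin

lemma PS: "prob_space M" using LCn by (simp add: log_concave_def)

sublocale prob_space M by (rule PS)

lemma sM: "sets M = sets borel" using LCn by (simp add: log_concave_def)

lemma spM: "space M = UNIV" using sets_eq_imp_space_eq[OF sM] by simp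

lemma closed_sets: "closed A \<Longrightarrow> A \<in> sets M" using sM borel_closed by auto

lemma Rn1: "measure M (Rn n) = 1" using LCn by (simp add: log_concave_def)

lemma full: assumes A: "A \<in> sets M" shows "measure M (A \<inter> Rn n) = measure M A"
proof -
  have R: "Rn n \<in> sets M" by (rule closed_sets[OF Rn_closed])
  have c: "measure M (UNIV - Rn n) = 0" using prob_compl[OF R] Rn1 spM by simp
  have R': "UNIV - Rn n \<in> sets M" using sets.compl_sets[OF R] spM by simp
  have U: "(A \<inter> Rn n) \<union> (UNIV - Rn n) \<in> sets M" by (intro sets.Un sets.Int A R R')
  have "measure M A \<le> measure M ((A \<inter> Rn n) \<union> (UNIV - Rn n))"
    by (rule finite_measure_mono[OF _ U]) auto
  also have "\<dots> \<le> measure M (A \<inter> Rn n) + measure M (UNIV - Rn n)"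
    by (intro measure_Un_le sets.Int A R R')
  finally have 1: "measure M A \<le> measure M (A \<inter> Rn n)" using c by simp
  have 2: "measure M (A \<inter> Rn n) \<le> measure M A" using A by (intro finite_measure_mono) auto
  from 1 2 show ?thesis by simp
qed

lemma lim_gen:
  fixes S :: "real \<Rightarrow> (nat \<Rightarrow> real) set"
  assumes Sc: "\<And>c. closed (S c)"
  shows "(\<lambda>k. measure M (bx n k \<inter> S c)) \<longlonglongrightarrow> measure M (\<Union>k. bx n k \<inter> S c)"
proof -
  have r: "range (\<lambda>k. bx n k \<inter> S c) \<subseteq> sets M"
    by (intro image_subsetI closed_sets compact_imp_closed compact_Int_closed box_compact Sc)
  have i: "incseq (\<lambda>k. bx n k \<inter> S c)"
    unfolding incseq_def by (intro allI impI Int_mono box_mono order_refl)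
  show ?thesis
    by (rule finite_measure.finite_Lim_measure_incseq[OF finite_measure_axioms r i])
qed

lemma lc_marg:
  assumes l0: "0 < l" and l1: "l < 1"
  shows "measure M {w. a \<le> ip n w th} powr l * measure M {w. b \<le> ip n w th} powr (1 - l)
     \<le> measure M {w. l * a + (1 - l) * b \<le> ip n w th}"
proof -
  define S where "S c = {w. c \<le> ip n w th}" for c
  have Sc: "closed (S c)" for c unfolding S_def by (intro closed_Collect_le continuous_on_const ip_cont)
  have Sm: "S c \<in> sets M" for c by (rule closed_sets[OF Sc])
  define A where "A k = bx n k \<inter> S a" for k
  define B where "B k = bx n k \<inter> S b" for k
  have step: "measure M (A k) powr l * measure M (B k) powr (1 - l) \<le> measure M (S (l * a + (1 - l) * b))" for k
  proof -
    have cA: "compact (A k)" unfolding A_def by (rule compact_Int_closed[OF box_compact Sc])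
    have cB: "compact (B k)" unfolding B_def by (rule compact_Int_closed[OF box_compact Sc])
    have sA: "A k \<subseteq> Rn n" using box_sub unfolding A_def by blast
    have sB: "B k \<subseteq> Rn n" using box_sub unfolding B_def by blast
    have bm: "measure M {(\<lambda>i. l * a' i + (1 - l) * b' i) | a' b'. a' \<in> A k \<and> b' \<in> B k}
          \<ge> measure M (A k) powr l * measure M (B k) powr (1 - l)"
      using LCn cA cB sA sB l0 l1 unfolding log_concave_def by blast
    have sub: "{(\<lambda>i. l * a' i + (1 - l) * b' i) | a' b'. a' \<in> A k \<and> b' \<in> B k} \<subseteq> S (l * a + (1 - l) * b)"
    proof safe
      fix a' b' assume a': "a' \<in> A k" and b': "b' \<in> B k"
      have ia: "a \<le> ip n a' th" using a' by (simp add: A_def S_def)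
      have ib: "b \<le> ip n b' th" using b' by (simp add: B_def S_def)
      have "ip n (\<lambda>i. l * a' i + (1 - l) * b' i) th = (\<Sum>i<n. l * (a' i * th i) + (1 - l) * (b' i * th i))"
        unfolding ip_def by (rule sum.cong) (simp_all add: algebra_simps)
      also have "\<dots> = l * ip n a' th + (1 - l) * ip n b' th"
        unfolding ip_def by (simp add: sum.distrib sum_distrib_left)
      finally have lin: "ip n (\<lambda>i. l * a' i + (1 - l) * b' i) th = l * ip n a' th + (1 - l) * ip n b' th" .
      have "l * a + (1 - l) * b \<le> l * ip n a' th + (1 - l) * ip n b' th"
        using ia ib l0 l1 by (intro add_mono mult_left_mono) auto
      then show "(\<lambda>i. l * a' i + (1 - l) * b' i) \<in> S (l * a + (1 - l) * b)"
        using lin by (simp add: S_def)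
    qed
    have "measure M {(\<lambda>i. l * a' i + (1 - l) * b' i) | a' b'. a' \<in> A k \<and> b' \<in> B k} \<le> measure M (S (l * a + (1 - l) * b))"
      using sub Sm by (intro finite_measure_mono) auto
    with bm show ?thesis by linarith
  qed
  have lim: "(\<lambda>k. measure M (bx n k \<inter> S c)) \<longlonglongrightarrow> measure M (S c)" for c
  proof -
    have "(\<lambda>k. measure M (bx n k \<inter> S c)) \<longlonglongrightarrow> measure M (\<Union>k. bx n k \<inter> S c)"
      by (rule lim_gen[of S, OF Sc])
    moreover have "(\<Union>k. bx n k \<inter> S c) = S c \<inter> Rn n"
    proof
      show "(\<Union>k. bx n k \<inter> S c) \<subseteq> S c \<inter> Rn n"
      proof
        fix w assume "w \<in> (\<Union>k. bx n k \<inter> S c)"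
        then obtain k where "w \<in> bx n k" "w \<in> S c" by blast
        then show "w \<in> S c \<inter> Rn n" using box_sub[of n k] by blast
      qed
      show "S c \<inter> Rn n \<subseteq> (\<Union>k. bx n k \<inter> S c)"
      proof
        fix w assume w: "w \<in> S c \<inter> Rn n"
        then obtain k where "w \<in> bx n k" using box_ex by blast
        with w show "w \<in> (\<Union>k. bx n k \<inter> S c)" by blast
      qed
    qed
    moreover have "measure M (S c \<inter> Rn n) = measure M (S c)" by (rule full[OF Sm])
    ultimately show ?thesis by simp
  qed
  have goal: "measure M (S a) powr l * measure M (S b) powr (1 - l) \<le> measure M (S (l * a + (1 - l) * b))"
  proof (cases "measure M (S a) = 0 \<or> measure M (S b) = 0")
    case True then show ?thesis by auto
  next
    case False
    have "(\<lambda>k. measure M (A k) powr l * measure M (B k) powr (1 - l))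
        \<longlonglongrightarrow> measure M (S a) powr l * measure M (S b) powr (1 - l)"
      unfolding A_def B_def using False
      by (intro tendsto_mult tendsto_powr lim tendsto_const) auto
    then show ?thesis
      by (rule LIMSEQ_le_const2) (use step in auto)
  qed
  then show ?thesis by (simp add: S_def)
qed

end

lemma const_bound: assumes t: "1 \<le> t" shows "30 * exp t \<le> (100::real) powr t"
proof -
  have e1: "exp (t - 1) = exp 1 powr (t - 1)" by (simp add: powr_def)
  have "exp 1 powr (t - 1) \<le> 100 powr (t - 1)"
    using t e_less_272 by (intro powr_mono2) auto
  then have e2: "exp (t - 1) \<le> 100 powr (t - 1)" using e1 by simp
  have "exp t = exp 1 * exp (t - 1)" by (simp flip: exp_add)
  then have "30 * exp t = 30 * exp 1 * exp (t - 1)" by simp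
  also have "\<dots> \<le> 100 * exp (t - 1)"
    using e_less_272 by (intro mult_right_mono) auto
  also have "\<dots> \<le> 100 * 100 powr (t - 1)" using e2 by simp
  also have "\<dots> = 100 powr t"
  proof -
    have "(100::real) powr t = 100 powr (1 + (t - 1))" by simp
    also have "\<dots> = 100 powr 1 * 100 powr (t - 1)" by (rule powr_add)
    finally show ?thesis by simp
  qed
  finally show ?thesis .
qed

lemma key:
  assumes n1: "1 \<le> n" and LCn: "log_concave n M" and cen: "centered n M" and t: "1 \<le> t"
    and d0: "0 < \<delta>" and d1: "\<delta> < 1" and x: "x \<in> (\<lambda>z i. \<delta> * z i) ` Zplus n M t"
  shows "(1 - \<delta> powr t)\<^sup>2 / 100 powr t \<le> phi n M x"
proof -
  interpret lcn n M by (rule lcn.intro[OF LCn])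
  obtain z where z: "z \<in> Zplus n M t" and xz: "x = (\<lambda>i. \<delta> * z i)" using x by blast
  have zR: "z \<in> Rn n" and zH: "\<And>y. y \<in> Rn n \<Longrightarrow> ip n z y \<le> support_Zplus n M t y"
    using z by (auto simp: Zplus_def)
  have xR: "x \<in> Rn n" using zR by (simp add: xz Rn_def)
  define B where "B = (1 - \<delta> powr t)\<^sup>2 / 100 powr t"
  have dt0: "0 \<le> \<delta> powr t" by simp
  have dt1: "\<delta> powr t \<le> 1"
  proof -
    have "\<delta> powr t \<le> 1 powr t" using d0 d1 t by (intro powr_mono2) auto
    then show ?thesis by simp
  qed
  have Bbound: "B \<le> (1 - \<delta> powr t) / (30 * exp t)"
  proof -
    define e where "e = 1 - \<delta> powr t"
    have e0: "0 \<le> e" and e1: "e \<le> 1" using dt0 dt1 by (auto simp: e_def)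
    have "e\<^sup>2 \<le> e" using e0 e1 by (simp add: power2_eq_square mult_left_le_one_le)
    then have "e\<^sup>2 / 100 powr t \<le> e / 100 powr t" by (intro divide_right_mono) auto
    also have "\<dots> \<le> e / (30 * exp t)"
      using const_bound[OF t] e0 by (intro divide_left_mono) auto
    finally show ?thesis by (simp add: B_def e_def)
  qed
  have mainH: "B \<le> measure M H" if hs: "halfspace n H" and xH: "x \<in> H" for H
  proof -
    obtain u c where uR: "u \<in> Rn n" and unz: "\<exists>i<n. u i \<noteq> 0" and Hdef: "H = {w\<in>Rn n. ip n u w \<le> c}"
      using hs unfolding halfspace_def by blast
    define th where "th = (\<lambda>i. - u i)"
    have thR: "th \<in> Rn n" using uR by (simp add: th_def Rn_def)
    have ipth: "ip n w th = - ip n u w" for w by (simp add: ip_def th_def sum_negf mult.commute)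
    define X where "X = (\<lambda>w. ip n w th)"
    define G where "G = (\<lambda>s. measure M {w\<in>space M. s \<le> X w})"
    have coord: "integrable M (\<lambda>w. w i)" "integral\<^sup>L M (\<lambda>w. w i) = 0" if "i < n" for i
      using cen that by (auto simp: centered_def)
    have Xint: "integrable M X"
      unfolding X_def ip_def by (rule Bochner_Integration.integrable_sum) (auto intro: integrable_mult_left coord)
    have X0: "integral\<^sup>L M X = 0"
    proof -
      have "integral\<^sup>L M X = (\<Sum>i<n. integral\<^sup>L M (\<lambda>w. w i * th i))"
        unfolding X_def ip_def by (rule Bochner_Integration.integral_sum) (auto intro: integrable_mult_left coord)
      also have "\<dots> = 0" by (intro sum.neutral) (auto simp: coord)
      finally show ?thesis .
    qed
    have Geq: "G s = measure M {w. s \<le> ip n w th}" for s by (simp add: G_def spM X_def)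
    have LC1: "G a powr l * G b powr (1 - l) \<le> G (l * a + (1 - l) * b)" if "0 < l" "l < 1" for a b l
      unfolding Geq by (rule lc_marg[OF that])
    have ND: "\<not> (AE w in M. X w = 0)"
    proof
      assume ae: "AE w in M. X w = 0"
      define Z where "Z = {w. ip n w th = 0}"
      have Zc: "closed Z" unfolding Z_def by (intro closed_Collect_eq ip_cont continuous_on_const)
      have Zm: "Z \<in> sets M" by (rule closed_sets[OF Zc])
      have "AE w in M. w \<in> Z" using ae by (rule eventually_mono) (simp add: Z_def X_def)
      then have "measure M Z = 1" using AE_in_set_eq_1[OF Zm] by simp
      then have "measure M (Z \<inter> Rn n) = 1" using full[OF Zm] by simp
      moreover have "Z \<inter> Rn n = {w \<in> Rn n. ip n u w = 0}" by (auto simp: Z_def ipth)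
      moreover have "measure M {w \<in> Rn n. ip n u w = 0} < 1"
        using LCn uR unz unfolding log_concave_def by blast
      ultimately show False by simp
    qed
    have lc: "lc1 M X G"
      by (intro lc1.intro lc1_axioms.intro PS Xint X0 G_def LC1 ND)
    interpret L: lc1 M X G by (rule lc)
    define h where "h = support_Zplus n M t th"
    define I where "I = integral\<^sup>L M (\<lambda>w. max (ip n w th) 0 powr t)"
    have I0: "0 \<le> I" unfolding I_def by (rule integral_nonneg_AE) simp
    have h0: "0 \<le> h" by (simp add: h_def support_Zplus_def)
    have hpow: "h powr t = I"
    proof -
      have "h powr t = I powr (1 / t * t)" by (simp add: h_def support_Zplus_def I_def powr_powr)
      also have "1 / t * t = 1" using t by simp
      finally show ?thesis using I0 by simp
    qed
    have hint: "ennreal (h powr t) \<le> (\<integral>\<^sup>+w. ennreal (max (X w) 0 powr t) \<partial>M)"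
    proof (cases "integrable M (\<lambda>w. max (X w) 0 powr t)")
      case True
      have "ennreal I = (\<integral>\<^sup>+w. ennreal (max (X w) 0 powr t) \<partial>M)"
        unfolding I_def X_def by (rule nn_integral_eq_integral[symmetric]) (use True in \<open>auto simp: X_def\<close>)
      then show ?thesis using hpow by simp
    next
      case False
      then have "I = 0" unfolding I_def X_def by (simp add: not_integrable_integral_eq)
      then show ?thesis using hpow by simp
    qed
    have mg: "(1 - \<delta> powr t) / (30 * exp t) \<le> G (\<delta> * h)"
      by (rule L.main1d[OF t d0 d1 h0 hint])
    have Hc: "closed H"
    proof -
      have "H = Rn n \<inter> {w. ip n w u \<le> c}" by (auto simp: Hdef ip_comm)
      moreover have "closed {w. ip n w u \<le> c}" by (intro closed_Collect_le ip_cont continuous_on_const)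
      ultimately show ?thesis using Rn_closed by auto
    qed
    have Sc: "closed {w. \<delta> * h \<le> ip n w th}" by (intro closed_Collect_le ip_cont continuous_on_const)
    have incl: "{w. \<delta> * h \<le> ip n w th} \<inter> Rn n \<subseteq> H"
    proof
      fix w assume w: "w \<in> {w. \<delta> * h \<le> ip n w th} \<inter> Rn n"
      have a1: "ip n z th \<le> h" using zH[OF thR] by (simp add: h_def)
      have a2: "ip n z th = - ip n u z" by (rule ipth)
      have a3: "ip n u x = \<delta> * ip n u z" by (simp add: xz ip_def sum_distrib_left algebra_simps)
      have a4: "ip n u x \<le> c" using xH xR by (simp add: Hdef)
      have a5: "\<delta> * (- ip n u z) \<le> \<delta> * h" using a1 a2 d0 by (intro mult_left_mono) auto
      have a6: "\<delta> * h \<le> - ip n u w" using w ipth[of w] by simp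
      have "ip n u w \<le> c" using a3 a4 a5 a6 by simp
      then show "w \<in> H" using w by (simp add: Hdef)
    qed
    have "G (\<delta> * h) = measure M {w. \<delta> * h \<le> ip n w th}" by (rule Geq)
    also have "\<dots> = measure M ({w. \<delta> * h \<le> ip n w th} \<inter> Rn n)"
      by (rule full[OF closed_sets[OF Sc], symmetric])
    also have "\<dots> \<le> measure M H"
      by (rule finite_measure_mono[OF incl closed_sets[OF Hc]])
    finally show ?thesis using mg Bbound by linarith
  qed
  define e0 where "e0 = (\<lambda>i::nat. if i = 0 then (1::real) else 0)"
  have hs0: "halfspace n {w\<in>Rn n. ip n e0 w \<le> ip n e0 x}"
  proof -
    have "e0 \<in> Rn n" using n1 by (auto simp: e0_def Rn_def)
    moreover have "\<exists>i<n. e0 i \<noteq> 0" using n1 by (auto simp: e0_def)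
    ultimately show ?thesis unfolding halfspace_def by blast
  qed
  have ne: "{measure M H | H. halfspace n H \<and> x \<in> H} \<noteq> {}"
    using hs0 xR by blast
  have "B \<le> Inf {measure M H | H. halfspace n H \<and> x \<in> H}"
    by (rule cInf_greatest[OF ne]) (use mainH in blast)
  then show ?thesis by (simp add: phi_def B_def)
qed

theorem lemma4p3:
  shows "\<exists>C1::real. C1 > 1 \<and>
    (\<forall>n M t \<delta> x. n \<ge> 1 \<and> log_concave n M \<and> centered n M \<and> t \<ge> 1 \<and> 0 < \<delta> \<and> \<delta> < 1 \<and>
       x \<in> (\<lambda>z i. \<delta> * z i) ` Zplus n M t \<longrightarrow>
       phi n M x \<ge> (1 - \<delta> powr t)\<^sup>2 / C1 powr t)"
proof (rule exI[of _ 100], intro conjI allI impI)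
  show "(100::real) > 1" by simp
next
  fix n M t \<delta> x
  assume H: "n \<ge> 1 \<and> log_concave n M \<and> centered n M \<and> t \<ge> 1 \<and> 0 < \<delta> \<and> \<delta> < 1 \<and>
       x \<in> (\<lambda>z i. \<delta> * z i) ` Zplus n M t"
  then show "phi n M x \<ge> (1 - \<delta> powr t)\<^sup>2 / 100 powr t"
    using key[of n M t \<delta> x] by blast
qed

end
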